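(* Let $F\in\mathcal{F}^n$ with radial function $\rho$. For $x\in\mathbf{S}^n$, let $M(x)$ be an outward normal vector to a hyperplane supporting $F$ at $r(x)=\rho(x)x$, rescaled so that $\langle M(x),x\rangle=\rho(x)$. Then $v=-M(x)+\rho(x)x\in\partial\rho(x)$. Conversely, for each $v\in\partial\rho(x)$ there exists a unique hyperplane supporting $F$ at $r(x)$ with outward normal $M(x)$ such that $v=-M(x)+\rho(x)x$.
   Context: $\mathbf{S}^n$ is the unit sphere in $\mathbb{R}^{n+1}$, $n\ge1$, centered at the origin $\mathcal{O}$. $\mathcal{F}^n$ is the set of boundaries of compact convex sets in $\mathbb{R}^{n+1}$ containing $\mathcal{O}$ in their interior; for $F\in\mathcal{F}^n$ its radial function $\rho(x)$ is the distance from $\mathcal{O}$ to the point where the ray in direction $x\in\mathbf{S}^n$ meets $F$. For $f\in C(\mathbf{S}^n)$ and $x_0\in\mathbf{S}^n$, with tangent space $T\mathbf{S}^n_{x_0}=\{v\in\mathbb{R}^{n+1}:\langle v,x_0\rangle=0\}$, the subdifferential of $f$ at $x_0$ is $\partial f(x_0)=\{v\in T\mathbf{S}^n_{x_0}: f(x)\langle -v+f(x_0)x_0,x\rangle\le f^2(x_0)\ \forall x\in\mathbf{S}^n\}$. *)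

theory Defs
  imports "HOL-Analysis.Analysis"
begin

text \<open>F in the class F^n: the boundary of a compact convex set K in R^(n+1)
  containing the origin in its interior.\<close>
definition convex_body_origin :: "'a::euclidean_space set \<Rightarrow> bool" where
  "convex_body_origin K \<longleftrightarrow> compact K \<and> convex K \<and> 0 \<in> interior K"

definition radial_function :: "'a::euclidean_space set \<Rightarrow> 'a \<Rightarrow> real" where
  "radial_function K x = (THE r. 0 \<le> r \<and> r *\<^sub>R x \<in> frontier K)"

definition sphere_subdiff :: "('a::euclidean_space \<Rightarrow> real) \<Rightarrow> 'a \<Rightarrow> 'a set" where
  "sphere_subdiff f x0 = {v. inner v x0 = 0 \<and>
     (\<forall>x\<in>sphere 0 1. f x * inner (- v + f x0 *\<^sub>R x0) x \<le> (f x0)\<^sup>2)}"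

definition supporting_hyperplane :: "'a::euclidean_space set \<Rightarrow> 'a \<Rightarrow> 'a set \<Rightarrow> 'a \<Rightarrow> bool" where
  "supporting_hyperplane K p H N \<longleftrightarrow>
     N \<noteq> 0 \<and> H = {y. inner N y = inner N p} \<and> (\<forall>y\<in>K. inner N y \<le> inner N p)"

end

theory Submission
  imports Defs
begin

lemma shrink_int:
  fixes K :: "'a::euclidean_space set"
  assumes "convex K" "0 \<in> interior K" "t *\<^sub>R z \<in> closure K" "0 \<le> s" "s < t"
  shows "s *\<^sub>R z \<in> interior K"
proof -
  have tp: "t > 0" using assms by linarith
  have "t *\<^sub>R z - (1 - s/t) *\<^sub>R (t *\<^sub>R z - 0) \<in> interior K"
    by (rule mem_interior_closure_convex_shrink[OF assms(1,2,3)])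
       (use tp assms(4,5) in \<open>auto simp: field_simps\<close>)
  moreover have "t *\<^sub>R z - (1 - s/t) *\<^sub>R (t *\<^sub>R z - 0) = s *\<^sub>R z"
    using tp by (simp add: algebra_simps)
  ultimately show ?thesis by simp
qed

lemma rf_props:
  fixes K :: "'a::euclidean_space set"
  assumes cb: "convex_body_origin K" and z: "z \<noteq> 0"
  shows "0 < radial_function K z \<and> radial_function K z *\<^sub>R z \<in> frontier K"
    and "\<And>t. 0 \<le> t \<Longrightarrow> t *\<^sub>R z \<in> K \<Longrightarrow> t \<le> radial_function K z"
proof -
  have c: "compact K" "convex K" "0 \<in> interior K" using cb by (auto simp: convex_body_origin_def)
  have cl: "closure K = K" using c(1) by (simp add: compact_imp_closed closure_closed)
  obtain d where d: "0 < d" "(0 + d *\<^sub>R z) \<in> frontier K"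
    using ray_to_frontier[OF compact_imp_bounded[OF c(1)] c(3) z] by blast
  have uniq: "r = d" if "0 \<le> r" "r *\<^sub>R z \<in> frontier K" for r
  proof (rule ccontr)
    assume "r \<noteq> d"
    then consider "r < d" | "d < r" by linarith
    then show False
    proof cases
      case 1
      have "r *\<^sub>R z \<in> interior K"
        using shrink_int[OF c(2,3) _ that(1) 1] d(2) by (simp add: frontier_def)
      then show False using that(2) by (simp add: frontier_def)
    next
      case 2
      have "d *\<^sub>R z \<in> interior K"
        using shrink_int[OF c(2,3) _ _ 2] that(2) d(1) by (simp add: frontier_def)
      then show False using d(2) by (simp add: frontier_def)
    qed
  qed
  have eq: "radial_function K z = d"
    unfolding radial_function_def
    by (rule the_equality) (use d uniq in auto)
  show "0 < radial_function K z \<and> radial_function K z *\<^sub>R z \<in> frontier K"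
    using d eq by simp
  show "t \<le> radial_function K z" if "0 \<le> t" "t *\<^sub>R z \<in> K" for t
  proof (rule ccontr)
    assume "\<not> t \<le> radial_function K z"
    then have "d < t" using eq by simp
    then have "d *\<^sub>R z \<in> interior K"
      using shrink_int[OF c(2,3) _ _ \<open>d < t\<close>] that(2) d(1) cl by simp
    then show False using d(2) by (simp add: frontier_def)
  qed
qed

theorem proposition9:
  fixes K :: "'a::euclidean_space set" and x :: 'a
  assumes "DIM('a) \<ge> 2"
    and "convex_body_origin K"
    and "x \<in> sphere 0 1"
  shows "(\<forall>H M. supporting_hyperplane K (radial_function K x *\<^sub>R x) H M
              \<and> inner M x = radial_function K x
            \<longrightarrow> - M + radial_function K x *\<^sub>R x \<in> sphere_subdiff (radial_function K) x)
       \<and> (\<forall>v\<in>sphere_subdiff (radial_function K) x.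
            \<exists>!H. \<exists>M. supporting_hyperplane K (radial_function K x *\<^sub>R x) H M
              \<and> inner M x = radial_function K x
              \<and> v = - M + radial_function K x *\<^sub>R x)"
proof -
  let ?r = "radial_function K"
  have cb: "convex_body_origin K" by fact
  have c: "compact K" using cb by (auto simp: convex_body_origin_def)
  have cl: "closure K = K" using c by (simp add: compact_imp_closed closure_closed)
  have nx: "norm x = 1" using assms(3) by simp
  have xx: "inner x x = 1" using nx by (simp add: dot_square_norm)
  have x0: "x \<noteq> 0" using nx by auto
  have rx: "0 < ?r x" "?r x *\<^sub>R x \<in> K"
    using rf_props(1)[OF cb x0] cl by (auto simp: frontier_def)
  have inK: "?r z *\<^sub>R z \<in> K" if "z \<in> sphere 0 1" for z
  proof -
    have "z \<noteq> 0" using that by auto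
    then show ?thesis using rf_props(1)[OF cb] cl by (auto simp: frontier_def)
  qed
  have part1: "- M + ?r x *\<^sub>R x \<in> sphere_subdiff ?r x"
    if "supporting_hyperplane K (?r x *\<^sub>R x) H M" "inner M x = ?r x" for H M
  proof -
    have sup: "\<forall>y\<in>K. inner M y \<le> inner M (?r x *\<^sub>R x)" using that(1)
      by (simp add: supporting_hyperplane_def)
    have e: "- (- M + ?r x *\<^sub>R x) + ?r x *\<^sub>R x = M" by simp
    have "inner (- M + ?r x *\<^sub>R x) x = 0" using that(2) xx
      by (simp add: inner_add_left inner_diff_left)
    moreover have "?r z * inner M z \<le> (?r x)\<^sup>2" if "z \<in> sphere 0 1" for z
    proof -
      have "inner M (?r z *\<^sub>R z) \<le> inner M (?r x *\<^sub>R x)" using sup inK[OF that] by blast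
      then show ?thesis using \<open>inner M x = ?r x\<close> by (simp add: power2_eq_square)
    qed
    ultimately show ?thesis unfolding sphere_subdiff_def e by simp
  qed
  have part2: "\<exists>!H. \<exists>M. supporting_hyperplane K (?r x *\<^sub>R x) H M
              \<and> inner M x = ?r x \<and> v = - M + ?r x *\<^sub>R x"
    if v: "v \<in> sphere_subdiff ?r x" for v
  proof -
    define M where "M = - v + ?r x *\<^sub>R x"
    have vx: "inner v x = 0" and ineq: "\<And>z. z \<in> sphere 0 1 \<Longrightarrow> ?r z * inner M z \<le> (?r x)\<^sup>2"
      using v unfolding sphere_subdiff_def M_def by auto
    have Mx: "inner M x = ?r x" using vx xx unfolding M_def by (simp add: inner_add_left inner_diff_left)
    have M0: "M \<noteq> 0" using Mx rx(1) by auto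
    have Mp: "inner M (?r x *\<^sub>R x) = (?r x)\<^sup>2" using Mx by (simp add: power2_eq_square)
    have sup: "inner M y \<le> inner M (?r x *\<^sub>R x)" if y: "y \<in> K" for y
    proof (cases "y = 0")
      case True then show ?thesis using Mp by simp
    next
      case False
      define z where "z = (1 / norm y) *\<^sub>R y"
      have zs: "z \<in> sphere 0 1" using False by (simp add: z_def)
      have yz: "y = norm y *\<^sub>R z" using False by (simp add: z_def)
      have z0: "z \<noteq> 0" using zs by auto
      have le: "norm y \<le> ?r z" using rf_props(2)[OF cb z0, of "norm y"] yz y by simp
      have "inner M y = norm y * inner M z" by (subst yz) simp
      also have "\<dots> \<le> (?r x)\<^sup>2"
      proof (cases "inner M z \<le> 0")
        case True then have "norm y * inner M z \<le> 0" by (simp add: mult_nonneg_nonpos)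
        then show ?thesis by (smt (verit) zero_le_power2)
      next
        case False
        have "norm y * inner M z \<le> ?r z * inner M z"
          using le False by (intro mult_right_mono) auto
        also have "\<dots> \<le> (?r x)\<^sup>2" using ineq[OF zs] .
        finally show ?thesis .
      qed
      finally show ?thesis using Mp by simp
    qed
    have vM: "v = - M + ?r x *\<^sub>R x" unfolding M_def by simp
    show ?thesis
    proof (rule ex1I[where a = "{y. inner M y = inner M (?r x *\<^sub>R x)}"])
      show "\<exists>M'. supporting_hyperplane K (?r x *\<^sub>R x) {y. inner M y = inner M (?r x *\<^sub>R x)} M'
              \<and> inner M' x = ?r x \<and> v = - M' + ?r x *\<^sub>R x"
        using M0 sup Mx vM by (auto simp: supporting_hyperplane_def)
    next
      fix H assume "\<exists>M'. supporting_hyperplane K (?r x *\<^sub>R x) H M'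
              \<and> inner M' x = ?r x \<and> v = - M' + ?r x *\<^sub>R x"
      then obtain M' where h: "supporting_hyperplane K (?r x *\<^sub>R x) H M'" "v = - M' + ?r x *\<^sub>R x"
        by blast
      have "M' = M" using h(2) vM by simp
      then show "H = {y. inner M y = inner M (?r x *\<^sub>R x)}" using h(1)
        by (simp add: supporting_hyperplane_def)
    qed
  qed
  show ?thesis using part1 part2 by blast
qed

end
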